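(* Let $(X,\mathscr B,\mu,T)$ be a 1-step Markov shift, $\alpha$ its finite time-0 generating partition, and $\lambda$ a symmetric probability measure on $[0,1]$. Then $$\operatorname{Asc}^\lambda_\mu(X,\alpha,T)=\sum_{i=1}^\infty\Big(\int_0^1p^2(1-p)^{i-1}\,\lambda(dp)\Big)H_\mu(\alpha\mid\alpha_i).$$
   Context: 1-step Markov shift: $X=\mathcal A^{\mathbb Z}$, $\mathcal A$ finite, $T$ the shift, $\mu$ the stationary Markov measure given by a stochastic matrix $P$ and a fixed probability vector $p$. $\alpha=\{\{x:x_0=a\}:a\in\mathcal A\}$, $\alpha_i=T^{-i}\alpha$, $\alpha_S=\bigvee_{i\in S}T^{-i}\alpha$. With $n^*=\{0,\dots,n-1\}$ and weights $b_S^n=\int_0^1p^{|S|-1}(1-p)^{n-|S|}\,\lambda(dp)$ for $S\subset n^*$ with $0\in S$, define $\operatorname{Asc}^\lambda_\mu(X,\alpha,T)=\lim_{n\to\infty}\frac1n\sum_{S\subset n^*,\,0\in S}b_S^nH_\mu(\alpha_S)$. $H_\mu(\cdot\mid\cdot)$ is conditional entropy; $\lambda$ symmetric means $\int f(x)\lambda(dx)=\int f(1-x)\lambda(dx)$ for bounded measurable $f$. *)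

theory Defs
  imports "HOL-Probability.Probability"
begin

definition shift :: "(int \<Rightarrow> 'a) \<Rightarrow> (int \<Rightarrow> 'a)" where
  "shift x = (\<lambda>k. x (k + 1))"

definition alpha :: "(int \<Rightarrow> 'a) set set" where
  "alpha = {{x. x 0 = a} | a. True}"

definition alpha_i :: "nat \<Rightarrow> (int \<Rightarrow> 'a) set set" where
  "alpha_i i = (\<lambda>A. (shift ^^ i) -` A) ` alpha"

definition join_family :: "'i set \<Rightarrow> ('i \<Rightarrow> 'b set set) \<Rightarrow> 'b set set" where
  "join_family S Q = {A. A \<noteq> {} \<and> (\<exists>f. (\<forall>i\<in>S. f i \<in> Q i) \<and> A = (\<Inter>i\<in>S. f i))}"

definition alpha_S :: "nat set \<Rightarrow> (int \<Rightarrow> 'a) set set" where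
  "alpha_S S = join_family S alpha_i"

text \<open>Entropy of a finite partition (natural logarithm; 0 ln 0 = 0 since ln 0 = 0).\<close>
definition part_entropy :: "'b measure \<Rightarrow> 'b set set \<Rightarrow> real" where
  "part_entropy M Q = - (\<Sum>A\<in>Q. measure M A * ln (measure M A))"

definition cond_entropy :: "'b measure \<Rightarrow> 'b set set \<Rightarrow> 'b set set \<Rightarrow> real" where
  "cond_entropy M Q R =
     - (\<Sum>A\<in>Q. \<Sum>B\<in>R. measure M (A \<inter> B) * ln (measure M (A \<inter> B) / measure M B))"

definition b_weight :: "real measure \<Rightarrow> nat \<Rightarrow> nat set \<Rightarrow> real" where
  "b_weight lam n S = (\<integral>q. q ^ (card S - 1) * (1 - q) ^ (n - card S) \<partial>lam)"

text \<open>The n-th term whose limit defines Asc^lambda_mu(X, alpha, T).\<close>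
definition asc_seq :: "real measure \<Rightarrow> (int \<Rightarrow> 'a) measure \<Rightarrow> nat \<Rightarrow> real" where
  "asc_seq lam M n = (1 / real n) *
     (\<Sum>S\<in>{S. S \<subseteq> {..<n} \<and> 0 \<in> S}. b_weight lam n S * part_entropy M (alpha_S S))"

end

theory Submission
  imports Defs
begin


lemma sum_ind_r: "(\<Sum>c\<in>(UNIV::'a::finite set). f c * (if c = b then 1 else 0)) = (f b::real)"
proof -
  have "(\<Sum>c\<in>(UNIV::'a set). f c * (if c = b then 1 else 0)) = (\<Sum>c\<in>UNIV. if c = b then f c else 0)"
    by (rule sum.cong) auto
  also have "\<dots> = f b" by simp
  finally show ?thesis .
qed

lemma sum_ind_l: "(\<Sum>c\<in>(UNIV::'a::finite set). (if b = c then 1 else 0) * f c) = (f b::real)"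
proof -
  have "(\<Sum>c\<in>(UNIV::'a set). (if b = c then 1 else 0) * f c) = (\<Sum>c\<in>UNIV. if b = c then f c else 0)"
    by (rule sum.cong) auto
  also have "\<dots> = f b" by simp
  finally show ?thesis .
qed

locale mk =
  fixes P :: "'a::finite \<Rightarrow> 'a \<Rightarrow> real" and p :: "'a \<Rightarrow> real"
  assumes P_nonneg: "\<And>a b. P a b \<ge> 0"
    and P_stoch: "\<And>a. (\<Sum>b\<in>UNIV. P a b) = 1"
    and p_nonneg: "\<And>a. p a \<ge> 0"
    and p_sum: "(\<Sum>a\<in>UNIV. p a) = 1"
    and p_stat: "\<And>b. (\<Sum>a\<in>UNIV. p a * P a b) = p b"
begin

primrec pw :: "nat \<Rightarrow> 'a \<Rightarrow> 'a \<Rightarrow> real" where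
  "pw 0 a b = (if a = b then 1 else 0)"
| "pw (Suc d) a b = (\<Sum>c\<in>UNIV. pw d a c * P c b)"

lemma pw_one: "pw 1 a b = P a b"
  by (simp add: sum_ind_l)

lemma pw_nonneg: "pw d a b \<ge> 0"
  by (induction d arbitrary: b) (auto intro!: sum_nonneg mult_nonneg_nonneg P_nonneg)

lemma pw_row: "(\<Sum>b\<in>UNIV. pw d a b) = 1"
proof (induction d)
  case 0 then show ?case by simp
next
  case (Suc d)
  have "(\<Sum>b\<in>UNIV. pw (Suc d) a b) = (\<Sum>b\<in>UNIV. \<Sum>c\<in>UNIV. pw d a c * P c b)" by simp
  also have "\<dots> = (\<Sum>c\<in>UNIV. \<Sum>b\<in>UNIV. pw d a c * P c b)" by (rule sum.swap)
  also have "\<dots> = (\<Sum>c\<in>UNIV. pw d a c * (\<Sum>b\<in>UNIV. P c b))" by (simp add: sum_distrib_left)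
  also have "\<dots> = 1" using Suc by (simp add: P_stoch)
  finally show ?case .
qed

lemma pw_le1: "pw d a b \<le> 1"
proof -
  have "pw d a b \<le> (\<Sum>b\<in>UNIV. pw d a b)"
    by (rule member_le_sum) (auto simp: pw_nonneg)
  then show ?thesis by (simp add: pw_row)
qed

lemma pw_stat: "(\<Sum>a\<in>UNIV. p a * pw d a b) = p b"
proof (induction d arbitrary: b)
  case 0 then show ?case by (simp add: sum_ind_r)
next
  case (Suc d)
  have "(\<Sum>a\<in>UNIV. p a * pw (Suc d) a b) = (\<Sum>a\<in>UNIV. \<Sum>c\<in>UNIV. p a * pw d a c * P c b)"
    by (simp add: sum_distrib_left mult.assoc)
  also have "\<dots> = (\<Sum>c\<in>UNIV. \<Sum>a\<in>UNIV. p a * pw d a c * P c b)" by (rule sum.swap)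
  also have "\<dots> = (\<Sum>c\<in>UNIV. (\<Sum>a\<in>UNIV. p a * pw d a c) * P c b)" by (simp add: sum_distrib_right)
  also have "\<dots> = p b" using Suc by (simp add: p_stat)
  finally show ?case .
qed

lemma pw_ck: "(\<Sum>c\<in>UNIV. pw d1 a c * pw d2 c b) = pw (d1 + d2) a b"
proof (induction d2 arbitrary: b)
  case 0 then show ?case by (simp add: sum_ind_r)
next
  case (Suc d)
  have "(\<Sum>c\<in>UNIV. pw d1 a c * pw (Suc d) c b) = (\<Sum>c\<in>UNIV. \<Sum>e\<in>UNIV. pw d1 a c * pw d c e * P e b)"
    by (simp add: sum_distrib_left mult.assoc)
  also have "\<dots> = (\<Sum>e\<in>UNIV. \<Sum>c\<in>UNIV. pw d1 a c * pw d c e * P e b)" by (rule sum.swap)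
  also have "\<dots> = (\<Sum>e\<in>UNIV. (\<Sum>c\<in>UNIV. pw d1 a c * pw d c e) * P e b)" by (simp add: sum_distrib_right)
  also have "\<dots> = pw (d1 + Suc d) a b" using Suc by simp
  finally show ?case .
qed

fun Fn :: "nat \<Rightarrow> nat set \<Rightarrow> (nat \<Rightarrow> 'a) \<Rightarrow> real" where
  "Fn 0 S w = 0"
| "Fn (Suc k) S w = (if k = 0 then p (w (Max S)) else
     Fn k (S - {Max S}) w * pw (Max S - Max (S - {Max S})) (w (Max (S - {Max S}))) (w (Max S)))"

definition F :: "nat set \<Rightarrow> (nat \<Rightarrow> 'a) \<Rightarrow> real" where
  "F S w = Fn (card S) S w"

lemma F_single: "F {s} w = p (w s)"
  by (simp add: F_def)

lemma F_insert:
  assumes "finite S" "S \<noteq> {}" "\<forall>a\<in>S. a < m"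
  shows "F (insert m S) w = F S w * pw (m - Max S) (w (Max S)) (w m)"
proof -
  have m: "m \<notin> S" using assms by auto
  have mx: "Max (insert m S) = m" using assms by (auto intro!: Max_eqI)
  have d: "insert m S - {m} = S" using m by auto
  have c: "card (insert m S) = Suc (card S)" "card S \<noteq> 0" using assms m by auto
  show ?thesis unfolding F_def c(1) using c(2) by (simp add: mx d)
qed

lemma Fn_cong: "finite S \<Longrightarrow> card S = k \<Longrightarrow> (\<forall>i\<in>S. w i = w' i) \<Longrightarrow> Fn k S w = Fn k S w'"
proof (induction k arbitrary: S)
  case 0 then show ?case by simp
next
  case (Suc k)
  then have ne: "S \<noteq> {}" by auto
  have mS: "Max S \<in> S" using Suc.prems ne by simp
  show ?case
  proof (cases "k = 0")
    case True then show ?thesis using Suc.prems mS by simp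
  next
    case False
    have ne2: "S - {Max S} \<noteq> {}" using Suc.prems False mS
      by (metis card_Diff_singleton diff_Suc_1 card.empty)
    have m2: "Max (S - {Max S}) \<in> S" using ne2 Suc.prems
      by (metis Diff_iff Max_in finite_Diff)
    have "Fn k (S - {Max S}) w = Fn k (S - {Max S}) w'"
      using Suc.prems mS by (intro Suc.IH) auto
    then show ?thesis using Suc.prems mS m2 False by simp
  qed
qed

lemma F_cong: "finite S \<Longrightarrow> (\<forall>i\<in>S. w i = w' i) \<Longrightarrow> F S w = F S w'"
  unfolding F_def by (rule Fn_cong) auto

end


definition C :: "nat set \<Rightarrow> (nat \<Rightarrow> 'a) \<Rightarrow> (int \<Rightarrow> 'a) set" where
  "C S w = {x. \<forall>i\<in>S. x (int i) = w i}"

locale mkM = mk P p for P :: "'a::finite \<Rightarrow> 'a \<Rightarrow> real" and p +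
  fixes M :: "(int \<Rightarrow> 'a) measure"
  assumes M_prob: "prob_space M"
    and M_space: "space M = UNIV"
    and M_sets: "sets M = sets (Pi\<^sub>M UNIV (\<lambda>_::int. count_space (UNIV :: 'a set)))"
    and M_markov: "\<And>(k::int) (n::nat) (w::nat \<Rightarrow> 'a).
        measure M {x. \<forall>j<Suc n. x (k + int j) = w j}
          = p (w 0) * (\<Prod>j<n. P (w j) (w (Suc j)))"
begin

lemma comp_meas: "(\<lambda>x. x i) \<in> measurable M (count_space UNIV)"
  using measurable_component_singleton[of i UNIV "\<lambda>_::int. count_space (UNIV :: 'a set)"]
  by (simp add: measurable_cong_sets[OF M_sets refl])

lemma C_sets: "finite S \<Longrightarrow> C S w \<in> sets M"
proof -
  assume fin: "finite S"
  have one: "{x\<in>space M. x (int i) = w i} \<in> sets M" for i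
  proof -
    have "(\<lambda>x. x (int i)) -` {w i} \<inter> space M \<in> sets M"
      by (rule measurable_sets[OF comp_meas]) simp
    moreover have "(\<lambda>x. x (int i)) -` {w i} \<inter> space M = {x\<in>space M. x (int i) = w i}" by auto
    ultimately show ?thesis by simp
  qed
  have "{x\<in>space M. \<forall>i\<in>S. x (int i) = w i} \<in> sets M"
    by (rule sets.sets_Collect_finite_All[OF one fin])
  then show ?thesis by (simp add: C_def M_space)
qed

lemma C_add:
  assumes fin: "finite S" and j: "j \<notin> S"
  shows "measure M (C S w) = (\<Sum>c\<in>UNIV. measure M (C (insert j S) (w(j:=c))))"
proof -
  interpret prob_space M by (rule M_prob)
  have eq: "C S w = (\<Union>c\<in>UNIV. C (insert j S) (w(j:=c)))"
    using j by (auto simp: C_def)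
  have s: "(\<lambda>c. C (insert j S) (w(j:=c))) ` UNIV \<subseteq> sets M" using C_sets fin by auto
  have d: "disjoint_family_on (\<lambda>c. C (insert j S) (w(j:=c))) UNIV"
    by (auto simp: disjoint_family_on_def C_def)
  have "measure M (\<Union>c\<in>UNIV. C (insert j S) (w(j:=c))) = (\<Sum>c\<in>UNIV. measure M (C (insert j S) (w(j:=c))))"
    by (rule measure_finite_Union[OF _ s d]) simp_all
  then show ?thesis using eq by simp
qed

lemma F_interval: "F {k..k+n} w = p (w k) * (\<Prod>j<n. P (w (k+j)) (w (k + Suc j)))"
proof (induction n)
  case 0 then show ?case by (simp add: F_single)
next
  case (Suc n)
  have e: "{k..k + Suc n} = insert (k + Suc n) {k..k+n}" by auto
  have mx: "Max {k..k+n} = k + n" by (auto intro!: Max_eqI)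
  have "F {k..k + Suc n} w = F {k..k+n} w * pw (k + Suc n - (k+n)) (w (k+n)) (w (k + Suc n))"
    unfolding e by (subst F_insert) (auto simp: mx)
  also have "\<dots> = F {k..k+n} w * P (w (k+n)) (w (k + Suc n))"
    using pw_one by simp
  finally show ?case using Suc by simp
qed

lemma C_interval: "measure M (C {k..k+n} w) = F {k..k+n} w"
proof -
  have "C {k..k+n} w = {x. \<forall>j<Suc n. x (int k + int j) = w (k + j)}"
    unfolding C_def
  proof (intro set_eqI iffI; simp)
    fix x assume "\<forall>i\<in>{k..k + n}. x (int i) = w i"
    then show "\<forall>j<Suc n. x (int k + int j) = w (k + j)"
      by (metis add_le_cancel_left le_add1 less_Suc_eq_le atLeastAtMost_iff of_nat_add)
  next
    fix x assume a: "\<forall>j<Suc n. x (int k + int j) = w (k + j)"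
    show "\<forall>i\<in>{k..k + n}. x (int i) = w i"
    proof
      fix i assume "i \<in> {k..k+n}"
      then obtain j where "i = k + j" "j < Suc n" by (metis atLeastAtMost_iff le_Suc_ex less_Suc_eq_le add_le_cancel_left)
      then show "x (int i) = w i" using a by simp
    qed
  qed
  then show ?thesis
    using M_markov[where k="int k" and n=n and w="\<lambda>j. w (k + j)"] by (simp add: F_interval)
qed

lemma fill:
  assumes "finite S" "S \<noteq> {}" "j \<notin> S" "Min S < j" "j < Max S"
  shows "(\<Sum>c\<in>UNIV. F (insert j S) (w(j:=c))) = F S w"
  using assms
proof (induction S arbitrary: j rule: finite_linorder_max_induct)
  case empty then show ?case by simp
next
  case (insert m A)
  have A: "A \<noteq> {}"
  proof
    assume "A = {}" then show False using insert.prems by simp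
  qed
  have mx: "Max (insert m A) = m" using insert A by (auto intro!: Max_eqI)
  have mn: "Min (insert m A) = Min A" using insert A
    by (metis Min_insert Min_in min.absorb2 order.strict_implies_order)
  let ?m' = "Max A"
  have m'A: "?m' \<in> A" using insert A by simp
  have jm: "j < m" using insert.prems mx by simp
  have jne: "j \<noteq> ?m'" using insert.prems m'A by auto
  show ?case
  proof (cases "j > ?m'")
    case True
    have all: "\<forall>a\<in>A. a < j" using True insert.hyps A by (meson Max_ge le_less_trans)
    have mx2: "Max (insert j A) = j" using insert A all by (auto intro!: Max_eqI)
    have "F (insert j (insert m A)) (w(j:=c)) = F A w * (pw (j - ?m') (w ?m') c * pw (m - j) c (w m))" for c
    proof -
      have "F (insert j (insert m A)) (w(j:=c)) = F (insert m (insert j A)) (w(j:=c))"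
        by (simp add: insert_commute)
      also have "\<dots> = F (insert j A) (w(j:=c)) * pw (m - j) c (w m)"
        using insert.hyps jm mx2 all jm by (subst F_insert) auto
      also have "F (insert j A) (w(j:=c)) = F A (w(j:=c)) * pw (j - ?m') (w ?m') c"
        using insert.hyps A all jne by (subst F_insert) auto
      also have "F A (w(j:=c)) = F A w"
        using insert.hyps insert.prems by (intro F_cong) auto
      finally show ?thesis by (simp only: mult.assoc)
    qed
    then have "(\<Sum>c\<in>UNIV. F (insert j (insert m A)) (w(j:=c))) = F A w * (\<Sum>c\<in>UNIV. pw (j - ?m') (w ?m') c * pw (m - j) c (w m))"
      by (simp add: sum_distrib_left)
    also have "\<dots> = F A w * pw (m - ?m') (w ?m') (w m)"
      using True jm by (simp add: pw_ck)
    also have "\<dots> = F (insert m A) w"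
      using insert.hyps A by (subst F_insert) auto
    finally show ?thesis .
  next
    case False
    then have jl: "j < ?m'" using jne by simp
    have mx2: "Max (insert j A) = ?m'" using insert A jl by (auto intro!: Max_eqI)
    have allj: "\<forall>a\<in>insert j A. a < m" using insert.hyps jm by auto
    have "F (insert j (insert m A)) (w(j:=c)) = F (insert j A) (w(j:=c)) * pw (m - ?m') (w ?m') (w m)" for c
    proof -
      have "F (insert j (insert m A)) (w(j:=c)) = F (insert m (insert j A)) (w(j:=c))"
        by (simp add: insert_commute)
      also have "\<dots> = F (insert j A) (w(j:=c)) * pw (m - ?m') (w ?m') (w m)"
        using insert.hyps allj mx2 jm jne by (subst F_insert) auto
      finally show ?thesis .
    qed
    then have "(\<Sum>c\<in>UNIV. F (insert j (insert m A)) (w(j:=c))) = (\<Sum>c\<in>UNIV. F (insert j A) (w(j:=c))) * pw (m - ?m') (w ?m') (w m)"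
      by (simp add: sum_distrib_right)
    also have "(\<Sum>c\<in>UNIV. F (insert j A) (w(j:=c))) = F A w"
      using insert.prems mn jl A by (intro insert.IH) auto
    also have "F A w * pw (m - ?m') (w ?m') (w m) = F (insert m A) w"
      using insert.hyps A by (subst F_insert) auto
    finally show ?thesis .
  qed
qed

lemma C_F:
  assumes "finite S" "S \<noteq> {}"
  shows "measure M (C S w) = F S w"
proof -
  define k where "k = card ({Min S..Max S} - S)"
  then show ?thesis using assms
  proof (induction k arbitrary: S w rule: less_induct)
    case (less k)
    show ?case
    proof (cases "{Min S..Max S} - S = {}")
      case True
      have mm: "Min S \<le> Max S" using less.prems by simp
      have "S = {Min S..Max S}" using True less.prems by auto
      then have "S = {Min S..Min S + (Max S - Min S)}" using mm by simp
      then show ?thesis using C_interval by metis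
    next
      case False
      then obtain j where j: "j \<in> {Min S..Max S}" "j \<notin> S" by blast
      have jb: "Min S < j" "j < Max S" using j less.prems
        by (metis atLeastAtMost_iff Min_in Max_in le_neq_trans)+
      have fi: "finite (insert j S)" "insert j S \<noteq> {}" using less.prems by auto
      have mn: "Min (insert j S) = Min S" "Max (insert j S) = Max S"
        using jb less.prems
        by (metis Min_insert min.absorb2 less_imp_le, metis Max_insert max.absorb2 less_imp_le)
      have hs: "{Min (insert j S)..Max (insert j S)} - insert j S = ({Min S..Max S} - S) - {j}"
        using mn by auto
      have lt: "card ({Min (insert j S)..Max (insert j S)} - insert j S) < k"
        unfolding hs less.prems(1) using j by (intro card_Diff1_less) auto
      have "measure M (C S w) = (\<Sum>c\<in>UNIV. measure M (C (insert j S) (w(j:=c))))"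
        using less.prems j by (intro C_add) auto
      also have "\<dots> = (\<Sum>c\<in>UNIV. F (insert j S) (w(j:=c)))"
        using less.IH[OF lt refl fi] by (simp del: fun_upd_apply)
      also have "\<dots> = F S w" using less.prems j jb by (intro fill) auto
      finally show ?thesis .
    qed
  qed
qed

end


lemma sum_PiE_ins:
  assumes "finite S" "m \<notin> S"
  shows "(\<Sum>w\<in>PiE (insert m S) (\<lambda>_. UNIV::'a::finite set). f w) =
         (\<Sum>g\<in>PiE S (\<lambda>_. UNIV). \<Sum>c\<in>UNIV. (f (g(m:=c)) :: real))"
proof -
  have "(\<Sum>w\<in>PiE (insert m S) (\<lambda>_. UNIV::'a set). f w) =
        (\<Sum>x\<in>UNIV \<times> PiE S (\<lambda>_. UNIV). f ((\<lambda>(y, g). g(m := y)) x))"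
    unfolding PiE_insert_eq
    by (subst sum.reindex) (auto intro!: inj_combinator assms simp: comp_def)
  also have "\<dots> = (\<Sum>c\<in>UNIV. \<Sum>g\<in>PiE S (\<lambda>_. UNIV). f (g(m:=c)))"
    by (simp add: sum.cartesian_product case_prod_beta)
  also have "\<dots> = (\<Sum>g\<in>PiE S (\<lambda>_. UNIV). \<Sum>c\<in>UNIV. f (g(m:=c)))"
    by (rule sum.swap)
  finally show ?thesis .
qed

lemma shift_pow_pt: "(shift ^^ i) x k = x (k + int i)"
proof (induction i arbitrary: k)
  case 0 then show ?case by simp
next
  case (Suc i)
  have "(shift ^^ Suc i) x k = (shift ^^ i) x (k + 1)" by (simp add: shift_def)
  also have "\<dots> = x (k + 1 + int i)" by (rule Suc.IH)
  also have "k + 1 + int i = k + int (Suc i)" by simp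
  finally show ?case .
qed

lemma shift_pow: "(shift ^^ i) x = (\<lambda>k. x (k + int i))"
  by (rule ext) (rule shift_pow_pt)

lemma alpha_eq: "alpha = (\<lambda>a. {x. x 0 = a}) ` UNIV"
  unfolding alpha_def by auto

lemma alpha_i_eq: "alpha_i i = (\<lambda>a. {x. x (int i) = a}) ` UNIV"
proof -
  have "(\<lambda>A. (shift ^^ i) -` A) ` alpha = (\<lambda>a. (shift ^^ i) -` {x. x 0 = a}) ` UNIV"
    unfolding alpha_eq image_image by simp
  also have "(\<lambda>a. (shift ^^ i) -` {x. x 0 = a}) = (\<lambda>a. {x. x (int i) = a})"
    by (auto simp: shift_pow)
  finally show ?thesis by (simp add: alpha_i_def)
qed


lemma C_ne1: "(\<lambda>k. w (nat k)) \<in> C S w" by (simp add: C_def)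
lemma C_ne: "C S w \<noteq> {}" using C_ne1[of w S] by auto

lemma alpha_S_eq: "alpha_S S = C S ` PiE S (\<lambda>_. UNIV)"
proof (intro set_eqI iffI)
  fix A assume "A \<in> alpha_S S"
  then obtain f where f: "A \<noteq> {}" "\<forall>i\<in>S. f i \<in> alpha_i i" "A = (\<Inter>i\<in>S. f i)"
    unfolding alpha_S_def join_family_def by auto
  have "\<forall>i\<in>S. \<exists>a. f i = {x. x (int i) = a}" using f(2) by (auto simp: alpha_i_eq)
  then obtain g where g: "\<forall>i\<in>S. f i = {x. x (int i) = g i}" by metis
  let ?w = "restrict g S"
  have "A = C S ?w" using f(3) g by (auto simp: C_def)
  moreover have "?w \<in> PiE S (\<lambda>_. UNIV)" by simp
  ultimately show "A \<in> C S ` PiE S (\<lambda>_. UNIV)" by (rule image_eqI)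
next
  fix A assume "A \<in> C S ` PiE S (\<lambda>_. UNIV)"
  then obtain w where w: "A = C S w" by auto
  let ?f = "\<lambda>i. {x. x (int i) = w i}"
  have "\<forall>i\<in>S. ?f i \<in> alpha_i i" by (auto simp: alpha_i_eq)
  moreover have "A = (\<Inter>i\<in>S. ?f i)" using w by (auto simp: C_def)
  moreover have "A \<noteq> {}" using w C_ne by simp
  ultimately show "A \<in> alpha_S S" unfolding alpha_S_def join_family_def by (intro CollectI conjI exI[of _ ?f]) auto
qed

lemma C_inj: "inj_on (C S) (PiE S (\<lambda>_. UNIV))"
proof (rule inj_onI)
  fix w w' assume w: "w \<in> PiE S (\<lambda>_. UNIV)" "w' \<in> PiE S (\<lambda>_. UNIV)" and e: "C S w = C S w'"
  show "w = w'"
  proof (rule PiE_ext[OF w])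
    fix i assume "i \<in> S"
    have "(\<lambda>k. w (nat k)) \<in> C S w" by (simp add: C_def)
    then have "(\<lambda>k. w (nat k)) \<in> C S w'" using e by simp
    then show "w i = w' i" using \<open>i \<in> S\<close> by (simp add: C_def)
  qed
qed

context mkM begin

definition hh :: "nat \<Rightarrow> real" where
  "hh d = - (\<Sum>a\<in>UNIV. \<Sum>b\<in>UNIV. p a * pw d a b * ln (pw d a b))"

definition H0 :: real where
  "H0 = - (\<Sum>a\<in>UNIV. p a * ln (p a))"

lemma F_nonneg: "finite S \<Longrightarrow> S \<noteq> {} \<Longrightarrow> F S w \<ge> 0"
  using C_F[symmetric] by simp

lemma E_F:
  assumes "finite S" "S \<noteq> {}"
  shows "part_entropy M (alpha_S S) = - (\<Sum>w\<in>PiE S (\<lambda>_. UNIV). F S w * ln (F S w))"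
  unfolding part_entropy_def alpha_S_eq
  by (subst sum.reindex[OF C_inj]) (simp add: C_F[OF assms])

lemma marginal:
  assumes "finite S" "S \<noteq> {}"
  shows "(\<Sum>w\<in>PiE S (\<lambda>_. UNIV). F S w * \<psi> (w (Max S))) = (\<Sum>a\<in>UNIV. p a * \<psi> a)"
  using assms
proof (induction S arbitrary: \<psi> rule: finite_linorder_max_induct)
  case empty then show ?case by simp
next
  case (insert m A)
  show ?case
  proof (cases "A = {}")
    case True
    then show ?thesis by (simp add: sum_PiE_ins F_single)
  next
    case False
    let ?m' = "Max A" let ?d = "m - Max A"
    have mA: "m \<notin> A" using insert by auto
    have mx: "Max (insert m A) = m" using insert False by (auto intro!: Max_eqI)
    have m'A: "?m' \<in> A" using insert False by simp
    have "(\<Sum>w\<in>PiE (insert m A) (\<lambda>_. UNIV). F (insert m A) w * \<psi> (w (Max (insert m A))))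
       = (\<Sum>g\<in>PiE A (\<lambda>_. UNIV). \<Sum>c\<in>UNIV. F (insert m A) (g(m:=c)) * \<psi> c)"
      unfolding mx by (subst sum_PiE_ins[OF insert.hyps(1) mA]) simp
    also have "\<dots> = (\<Sum>g\<in>PiE A (\<lambda>_. UNIV). F A g * (\<Sum>c\<in>UNIV. pw ?d (g ?m') c * \<psi> c))"
    proof (rule sum.cong[OF refl])
      fix g :: "nat \<Rightarrow> 'a" assume "g \<in> PiE A (\<lambda>_. UNIV)"
      have "F (insert m A) (g(m:=c)) = F A g * pw ?d (g ?m') c" for c
      proof -
        have "F (insert m A) (g(m:=c)) = F A (g(m:=c)) * pw ?d ((g(m:=c)) ?m') ((g(m:=c)) m)"
          using insert.hyps(1) False insert.hyps(2) by (rule F_insert)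
        also have "F A (g(m:=c)) = F A g" using insert.hyps mA by (intro F_cong) auto
        finally show ?thesis using m'A mA by (metis fun_upd_other fun_upd_same)
      qed
      then show "(\<Sum>c\<in>UNIV. F (insert m A) (g(m:=c)) * \<psi> c) = F A g * (\<Sum>c\<in>UNIV. pw ?d (g ?m') c * \<psi> c)"
        by (simp add: sum_distrib_left mult.assoc)
    qed
    also have "\<dots> = (\<Sum>a\<in>UNIV. p a * (\<Sum>c\<in>UNIV. pw ?d a c * \<psi> c))"
      by (rule insert.IH[OF False, where \<psi>="\<lambda>a. \<Sum>c\<in>UNIV. pw ?d a c * \<psi> c"])
    also have "\<dots> = (\<Sum>a\<in>UNIV. \<Sum>c\<in>UNIV. p a * pw ?d a c * \<psi> c)"
      by (simp add: sum_distrib_left mult.assoc)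
    also have "\<dots> = (\<Sum>c\<in>UNIV. \<Sum>a\<in>UNIV. p a * pw ?d a c * \<psi> c)"
      by (rule sum.swap)
    also have "\<dots> = (\<Sum>c\<in>UNIV. (\<Sum>a\<in>UNIV. p a * pw ?d a c) * \<psi> c)"
      by (simp add: sum_distrib_right)
    also have "\<dots> = (\<Sum>c\<in>UNIV. p c * \<psi> c)" by (simp add: pw_stat)
    finally show ?thesis .
  qed
qed

end


lemma xlnx_mult: "x \<ge> 0 \<Longrightarrow> y \<ge> 0 \<Longrightarrow> x*y*ln(x*y) = x*y*ln x + x*y*(ln y::real)"
  by (cases "x = 0 \<or> y = 0") (auto simp: ln_mult distrib_left)

context mkM begin

lemma F_ins_upd:
  assumes "finite A" "A \<noteq> {}" "\<forall>a\<in>A. a < m"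
  shows "F (insert m A) (g(m:=c)) = F A g * pw (m - Max A) (g (Max A)) c"
proof -
  have mA: "m \<notin> A" using assms by auto
  have m'A: "Max A \<in> A" using assms by simp
  have "F (insert m A) (g(m:=c)) = F A (g(m:=c)) * pw (m - Max A) ((g(m:=c)) (Max A)) ((g(m:=c)) m)"
    using assms by (rule F_insert)
  also have "F A (g(m:=c)) = F A g" using assms mA by (intro F_cong) auto
  finally show ?thesis using m'A mA by (metis fun_upd_other fun_upd_same)
qed

lemma E_single: "part_entropy M (alpha_S {s}) = H0"
  by (subst E_F) (simp_all add: sum_PiE_ins F_single H0_def)

lemma E_insert:
  assumes "finite A" "A \<noteq> {}" "\<forall>a\<in>A. a < m"
  shows "part_entropy M (alpha_S (insert m A)) = part_entropy M (alpha_S A) + hh (m - Max A)"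
proof -
  let ?d = "m - Max A"
  have mA: "m \<notin> A" using assms by auto
  have "(\<Sum>w\<in>PiE (insert m A) (\<lambda>_. UNIV). F (insert m A) w * ln (F (insert m A) w))
      = (\<Sum>g\<in>PiE A (\<lambda>_. UNIV). \<Sum>c\<in>UNIV. F (insert m A) (g(m:=c)) * ln (F (insert m A) (g(m:=c))))"
    by (rule sum_PiE_ins[OF assms(1) mA])
  also have "\<dots> = (\<Sum>g\<in>PiE A (\<lambda>_. UNIV). F A g * ln (F A g) + F A g * (\<Sum>c\<in>UNIV. pw ?d (g (Max A)) c * ln (pw ?d (g (Max A)) c)))"
  proof (rule sum.cong[OF refl])
    fix g :: "nat \<Rightarrow> 'a" assume "g \<in> PiE A (\<lambda>_. UNIV)"
    have "(\<Sum>c\<in>UNIV. F (insert m A) (g(m:=c)) * ln (F (insert m A) (g(m:=c))))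
        = (\<Sum>c\<in>UNIV. F A g * pw ?d (g (Max A)) c * ln (F A g) + F A g * pw ?d (g (Max A)) c * ln (pw ?d (g (Max A)) c))"
      unfolding F_ins_upd[OF assms]
      by (rule sum.cong[OF refl], rule xlnx_mult) (auto intro: F_nonneg[OF assms(1,2)] pw_nonneg)
    also have "\<dots> = F A g * ln (F A g) * (\<Sum>c\<in>UNIV. pw ?d (g (Max A)) c) + F A g * (\<Sum>c\<in>UNIV. pw ?d (g (Max A)) c * ln (pw ?d (g (Max A)) c))"
      by (simp add: sum.distrib sum_distrib_left mult_ac)
    also have "\<dots> = F A g * ln (F A g) + F A g * (\<Sum>c\<in>UNIV. pw ?d (g (Max A)) c * ln (pw ?d (g (Max A)) c))"
      by (simp add: pw_row)
    finally show "(\<Sum>c\<in>UNIV. F (insert m A) (g(m:=c)) * ln (F (insert m A) (g(m:=c)))) = F A g * ln (F A g) + F A g * (\<Sum>c\<in>UNIV. pw ?d (g (Max A)) c * ln (pw ?d (g (Max A)) c))" .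
  qed
  also have "\<dots> = (\<Sum>g\<in>PiE A (\<lambda>_. UNIV). F A g * ln (F A g)) + (\<Sum>a\<in>UNIV. p a * (\<Sum>c\<in>UNIV. pw ?d a c * ln (pw ?d a c)))"
    by (simp add: sum.distrib marginal[OF assms(1,2), of "\<lambda>a. \<Sum>c\<in>UNIV. pw ?d a c * ln (pw ?d a c)"])
  finally show ?thesis
    using assms by (simp add: E_F hh_def sum_distrib_left mult.assoc)
qed

lemma p_ge: "p a * pw d a b \<le> p b"
proof -
  have "p a * pw d a b \<le> (\<Sum>a\<in>UNIV. p a * pw d a b)"
    by (rule member_le_sum) (auto intro: mult_nonneg_nonneg p_nonneg pw_nonneg)
  then show ?thesis by (simp add: pw_stat)
qed

lemma cond_hh:
  assumes d: "d \<ge> 1"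
  shows "cond_entropy M alpha (alpha_i d) = hh d"
proof -
  have inj0: "inj (\<lambda>a::'a. {x::int\<Rightarrow>'a. x 0 = a})"
  proof (rule injI)
    fix a b :: 'a assume "{x::int\<Rightarrow>'a. x 0 = a} = {x. x 0 = b}"
    moreover have "(\<lambda>_. a) \<in> {x::int\<Rightarrow>'a. x 0 = a}" by simp
    ultimately have "(\<lambda>_. a) \<in> {x::int\<Rightarrow>'a. x 0 = b}" by simp
    then show "a = b" by simp
  qed
  have injd: "inj (\<lambda>a::'a. {x::int\<Rightarrow>'a. x (int d) = a})"
  proof (rule injI)
    fix a b :: 'a assume "{x::int\<Rightarrow>'a. x (int d) = a} = {x. x (int d) = b}"
    moreover have "(\<lambda>_. a) \<in> {x::int\<Rightarrow>'a. x (int d) = a}" by simp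
    ultimately have "(\<lambda>_. a) \<in> {x::int\<Rightarrow>'a. x (int d) = b}" by simp
    then show "a = b" by simp
  qed
  have mAB: "measure M ({x. x 0 = a} \<inter> {x. x (int d) = b}) = p a * pw d a b" for a b
  proof -
    let ?w = "\<lambda>i::nat. if i = 0 then a else b"
    have "{x. x 0 = a} \<inter> {x. x (int d) = b} = C (insert d {0}) ?w"
      using d by (auto simp: C_def)
    moreover have "F (insert d {0}) ?w = p a * pw d a b"
      using d by (subst F_insert) (auto simp: F_single)
    ultimately show ?thesis using C_F by simp
  qed
  have mB: "measure M {x. x (int d) = b} = p b" for b
  proof -
    have "{x. x (int d) = b} = C {d} (\<lambda>_. b)" by (auto simp: C_def)
    then show ?thesis using C_F[of "{d}"] by (simp add: F_single)
  qed
  let ?t = "\<lambda>a b. p a * pw d a b"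
  have tm: "?t a b * ln (?t a b / p b) = ?t a b * ln (pw d a b) + ?t a b * ln (p a) - ?t a b * ln (p b)" for a b
  proof (cases "?t a b = 0")
    case True then show ?thesis by (simp only: mult_zero_left)
  next
    case False
    have pa: "p a > 0" using False p_nonneg[of a] by (cases "p a = 0") auto
    have pwp: "pw d a b > 0" using False pw_nonneg[of d a b] by (cases "pw d a b = 0") auto
    have tp: "?t a b > 0" using pa pwp by simp
    have pb: "p b > 0" using p_ge[of a d b] tp by linarith
    have lneq: "ln (?t a b / p b) = ln (pw d a b) + ln (p a) - ln (p b)"
      using pa pwp pb by (simp add: ln_div ln_mult)
    show ?thesis unfolding lneq by (simp add: algebra_simps)
  qed
  have s1: "cond_entropy M alpha (alpha_i d) = - (\<Sum>a\<in>UNIV. \<Sum>b\<in>UNIV.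
      measure M ({x. x 0 = a} \<inter> {x. x (int d) = b}) * ln (measure M ({x. x 0 = a} \<inter> {x. x (int d) = b}) / measure M {x. x (int d) = b}))"
    unfolding cond_entropy_def alpha_eq alpha_i_eq sum.reindex[OF inj0] sum.reindex[OF injd] o_def ..
  have s2: "cond_entropy M alpha (alpha_i d) = - (\<Sum>a\<in>UNIV. \<Sum>b\<in>UNIV. ?t a b * ln (?t a b / p b))"
    unfolding s1 by (simp only: mAB mB)
  have s3: "(\<Sum>a\<in>UNIV. \<Sum>b\<in>UNIV. ?t a b * ln (?t a b / p b))
      = (\<Sum>a\<in>UNIV. \<Sum>b\<in>UNIV. ?t a b * ln (pw d a b)) + (\<Sum>a\<in>UNIV. \<Sum>b\<in>UNIV. ?t a b * ln (p a))
        - (\<Sum>a\<in>UNIV. \<Sum>b\<in>UNIV. ?t a b * ln (p b))"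
    unfolding tm by (simp only: sum.distrib sum_subtractf)
  have s4: "(\<Sum>a\<in>UNIV. \<Sum>b\<in>UNIV. ?t a b * ln (p a)) = (\<Sum>a\<in>UNIV. p a * ln (p a))"
  proof (rule sum.cong[OF refl])
    fix a
    have "(\<Sum>b\<in>UNIV. ?t a b * ln (p a)) = p a * ln (p a) * (\<Sum>b\<in>UNIV. pw d a b)"
      by (simp add: sum_distrib_left mult_ac)
    then show "(\<Sum>b\<in>UNIV. ?t a b * ln (p a)) = p a * ln (p a)" by (simp add: pw_row)
  qed
  have s5: "(\<Sum>a\<in>UNIV. \<Sum>b\<in>UNIV. ?t a b * ln (p b)) = (\<Sum>b\<in>UNIV. \<Sum>a\<in>UNIV. ?t a b * ln (p b))"
    by (rule sum.swap)
  have s6: "(\<Sum>b\<in>UNIV. \<Sum>a\<in>UNIV. ?t a b * ln (p b)) = (\<Sum>b\<in>UNIV. p b * ln (p b))"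
  proof (rule sum.cong[OF refl])
    fix b
    have "(\<Sum>a\<in>UNIV. ?t a b * ln (p b)) = (\<Sum>a\<in>UNIV. ?t a b) * ln (p b)"
      by (simp add: sum_distrib_right)
    then show "(\<Sum>a\<in>UNIV. ?t a b * ln (p b)) = p b * ln (p b)" by (simp add: pw_stat)
  qed
  have s7: "(\<Sum>a\<in>UNIV. \<Sum>b\<in>UNIV. ?t a b * ln (pw d a b)) = - hh d"
    by (simp add: hh_def)
  show ?thesis unfolding s2 s3 s4 s5 s6 s7 by simp
qed

end


definition W :: "nat \<Rightarrow> nat set set" where
  "W n = {S. S \<subseteq> {..<n} \<and> 0 \<in> S}"

definition wt :: "real \<Rightarrow> nat \<Rightarrow> nat set \<Rightarrow> real" where
  "wt q n S = q ^ (card S - 1) * (1 - q) ^ (n - card S)"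

lemma W_finite: "finite (W n)"
proof -
  have "W n \<subseteq> Pow {..<n}" by (auto simp: W_def)
  then show ?thesis by (rule finite_subset) simp
qed

lemma W_mem: "S \<in> W n \<Longrightarrow> finite S \<and> S \<noteq> {} \<and> (\<forall>a\<in>S. a < n) \<and> Max S < n \<and> card S \<ge> 1 \<and> card S \<le> n"
proof -
  assume S: "S \<in> W n"
  then have sub: "S \<subseteq> {..<n}" and z: "0 \<in> S" by (auto simp: W_def)
  have fin: "finite S" using sub finite_subset by blast
  have ne: "S \<noteq> {}" using z by auto
  have "card S \<le> card {..<n}" using sub by (intro card_mono) auto
  moreover have "card S \<ge> 1" using fin ne by (simp add: Suc_leI card_gt_0_iff)
  moreover have "Max S < n" using fin ne sub by auto
  ultimately show ?thesis using fin ne sub by auto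
qed

lemma W_one: "W 1 = {{0}}"
  by (auto simp: W_def)

lemma W_Suc0: "W (Suc 0) = {{0}}"
  by (auto simp: W_def)

lemma sum_W_Suc:
  assumes "n \<ge> 1"
  shows "(\<Sum>S\<in>W (Suc n). f S) = (\<Sum>S\<in>W n. f S) + (\<Sum>S\<in>W n. (f (insert n S) :: real))"
proof -
  have eq: "W (Suc n) = W n \<union> insert n ` W n"
  proof (intro set_eqI iffI)
    fix S assume S: "S \<in> W (Suc n)"
    show "S \<in> W n \<union> insert n ` W n"
    proof (cases "n \<in> S")
      case True
      have "S - {n} \<in> W n" using S assms by (auto simp: W_def)
      moreover have "S = insert n (S - {n})" using True by auto
      ultimately show ?thesis by blast
    next
      case False
      then have "S \<in> W n" using S by (auto simp: W_def less_Suc_eq)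
      then show ?thesis by blast
    qed
  next
    fix S assume "S \<in> W n \<union> insert n ` W n"
    then show "S \<in> W (Suc n)" by (auto simp: W_def)
  qed
  have dis: "W n \<inter> insert n ` W n = {}" by (auto simp: W_def)
  have inj: "inj_on (insert n) (W n)"
  proof (rule inj_onI)
    fix S T assume S: "S \<in> W n" and T: "T \<in> W n" and e: "insert n S = insert n T"
    have "n \<notin> S" "n \<notin> T" using W_mem[OF S] W_mem[OF T] by auto
    then show "S = T" using e by (metis Diff_insert_absorb)
  qed
  have "(\<Sum>S\<in>W n \<union> insert n ` W n. f S) = (\<Sum>S\<in>W n. f S) + (\<Sum>S\<in>insert n ` W n. f S)"
    by (rule sum.union_disjoint) (simp_all add: W_finite dis)
  also have "(\<Sum>S\<in>insert n ` W n. f S) = (\<Sum>S\<in>W n. f (insert n S))"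
    by (subst sum.reindex[OF inj]) simp
  finally show ?thesis unfolding eq .
qed

lemma wt_Suc_out: "S \<in> W n \<Longrightarrow> wt q (Suc n) S = (1 - q) * wt q n S"
proof -
  assume S: "S \<in> W n"
  have "card S \<le> n" using W_mem[OF S] by simp
  then have "Suc n - card S = Suc (n - card S)" by (rule Suc_diff_le)
  then show ?thesis by (simp add: wt_def)
qed

lemma wt_Suc_in: "S \<in> W n \<Longrightarrow> wt q (Suc n) (insert n S) = q * wt q n S"
proof -
  assume S: "S \<in> W n"
  have nS: "n \<notin> S" "finite S" using W_mem[OF S] by auto
  then have c: "card (insert n S) = Suc (card S)" by simp
  have "card S \<ge> 1" using W_mem[OF S] by simp
  then have "q ^ card S = q * q ^ (card S - 1)" by (cases "card S") auto
  then show ?thesis unfolding wt_def c by simp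
qed

lemma T_one: "n \<ge> 1 \<Longrightarrow> (\<Sum>S\<in>W n. wt q n S) = 1"
proof (induction n rule: dec_induct)
  case base then show ?case by (simp add: W_one W_Suc0 wt_def)
next
  case (step n)
  have "(\<Sum>S\<in>W (Suc n). wt q (Suc n) S) = (\<Sum>S\<in>W n. (1 - q) * wt q n S) + (\<Sum>S\<in>W n. q * wt q n S)"
    using step.hyps by (simp add: sum_W_Suc wt_Suc_out wt_Suc_in)
  also have "\<dots> = 1" using step.IH by (simp add: sum_distrib_left[symmetric])
  finally show ?case .
qed

lemma D_closed:
  "(\<Sum>S\<in>W (Suc k). wt q (Suc k) S * g (Suc k - Max S))
     = (\<Sum>i<k. q * (1 - q) ^ i * g (Suc i)) + (1 - q) ^ k * g (Suc k)"
proof (induction k arbitrary: g)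
  case 0 then show ?case by (simp add: W_one W_Suc0 wt_def)
next
  case (Suc k)
  let ?n = "Suc k"
  have mx: "Suc ?n - Max S = Suc (?n - Max S)" if "S \<in> W ?n" for S
  proof -
    have "Max S < ?n" using W_mem[OF that] by blast
    then show ?thesis by (intro Suc_diff_le less_imp_le)
  qed
  have mx2: "S \<in> W ?n \<Longrightarrow> Max (insert ?n S) = ?n" for S
    using W_mem[of S ?n] by (auto intro!: Max_eqI)
  have "(\<Sum>S\<in>W (Suc ?n). wt q (Suc ?n) S * g (Suc ?n - Max S))
     = (\<Sum>S\<in>W ?n. (1 - q) * (wt q ?n S * g (Suc (?n - Max S)))) + (\<Sum>S\<in>W ?n. q * g 1 * wt q ?n S)"
    by (simp add: sum_W_Suc wt_Suc_out wt_Suc_in mx mx2 mult_ac cong: sum.cong)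
  also have "\<dots> = (1 - q) * (\<Sum>S\<in>W ?n. wt q ?n S * (\<lambda>j. g (Suc j)) (?n - Max S)) + q * g 1"
    by (simp add: sum_distrib_left[symmetric] T_one)
  also have "\<dots> = (1 - q) * ((\<Sum>i<k. q * (1 - q) ^ i * g (Suc (Suc i))) + (1 - q) ^ k * g (Suc (Suc k))) + q * g 1"
    using Suc[of "\<lambda>j. g (Suc j)"] by simp
  also have "\<dots> = (\<Sum>i<Suc k. q * (1 - q) ^ i * g (Suc i)) + (1 - q) ^ Suc k * g (Suc (Suc k))"
  proof -
    have sh: "(\<Sum>i<Suc k. q * (1 - q) ^ i * g (Suc i)) = q * (1 - q) ^ 0 * g (Suc 0) + (\<Sum>i<k. q * (1 - q) ^ Suc i * g (Suc (Suc i)))"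
      by (rule sum.lessThan_Suc_shift)
    have d: "(1 - q) * (\<Sum>i<k. q * (1 - q) ^ i * g (Suc (Suc i))) = (\<Sum>i<k. q * (1 - q) ^ Suc i * g (Suc (Suc i)))"
      unfolding sum_distrib_left by (rule sum.cong) simp_all
    show ?thesis unfolding sh distrib_left d by simp
  qed
  finally show ?case .
qed

lemma G_closed:
  fixes E :: "nat set \<Rightarrow> real" and hh :: "nat \<Rightarrow> real"
  assumes E0: "E {0} = Hz"
    and Eins: "\<And>S m. finite S \<Longrightarrow> S \<noteq> {} \<Longrightarrow> \<forall>a\<in>S. a < m \<Longrightarrow> E (insert m S) = E S + hh (m - Max S)"
  shows "(\<Sum>S\<in>W (Suc k). wt q (Suc k) S * E S)
     = Hz + (\<Sum>i<k. hh (Suc i) * (q^2 * (1 - q) ^ i * (real k - real i) + q * (1 - q) ^ Suc i))"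
proof (induction k)
  case 0 then show ?case by (simp add: W_one W_Suc0 wt_def E0)
next
  case (Suc k)
  let ?n = "Suc k"
  have ins: "S \<in> W ?n \<Longrightarrow> E (insert ?n S) = E S + hh (?n - Max S)" for S
    using W_mem[of S ?n] by (intro Eins) auto
  have "(\<Sum>S\<in>W (Suc ?n). wt q (Suc ?n) S * E S)
     = (\<Sum>S\<in>W ?n. (1 - q) * (wt q ?n S * E S)) + (\<Sum>S\<in>W ?n. q * (wt q ?n S * E S) + q * (wt q ?n S * hh (?n - Max S)))"
    by (simp add: sum_W_Suc wt_Suc_out wt_Suc_in ins algebra_simps cong: sum.cong)
  also have "\<dots> = (\<Sum>S\<in>W ?n. (1 - q) * (wt q ?n S * E S) + (q * (wt q ?n S * E S) + q * (wt q ?n S * hh (?n - Max S))))"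
    by (simp only: sum.distrib)
  also have "\<dots> = (\<Sum>S\<in>W ?n. wt q ?n S * E S + q * (wt q ?n S * hh (?n - Max S)))"
    by (rule sum.cong) (simp_all add: algebra_simps)
  also have "\<dots> = (\<Sum>S\<in>W ?n. wt q ?n S * E S) + q * (\<Sum>S\<in>W ?n. wt q ?n S * hh (?n - Max S))"
    by (simp only: sum.distrib sum_distrib_left)
  also have "\<dots> = Hz + (\<Sum>i<k. hh (Suc i) * (q^2 * (1 - q) ^ i * (real k - real i) + q * (1 - q) ^ Suc i))
       + q * ((\<Sum>i<k. q * (1 - q) ^ i * hh (Suc i)) + (1 - q) ^ k * hh (Suc k))"
    by (simp add: Suc.IH D_closed)
  also have "\<dots> = Hz + (\<Sum>i<Suc k. hh (Suc i) * (q^2 * (1 - q) ^ i * (real (Suc k) - real i) + q * (1 - q) ^ Suc i))"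
  proof -
    have a: "(\<Sum>i<k. hh (Suc i) * (q^2 * (1 - q) ^ i * (real (Suc k) - real i) + q * (1 - q) ^ Suc i))
      = (\<Sum>i<k. hh (Suc i) * (q^2 * (1 - q) ^ i * (real k - real i) + q * (1 - q) ^ Suc i) + q * (q * (1 - q) ^ i * hh (Suc i)))"
      by (rule sum.cong) (simp_all add: algebra_simps power2_eq_square)
    have b: "hh (Suc k) * (q^2 * (1 - q) ^ k * (real (Suc k) - real k) + q * (1 - q) ^ Suc k) = q * ((1 - q) ^ k * hh (Suc k))"
      by (simp add: algebra_simps power2_eq_square)
    show ?thesis unfolding sum.lessThan_Suc a b sum.distrib sum_distrib_left[symmetric] by (simp add: algebra_simps)
  qed
  finally show ?case .
qed


lemma xlnx_bounds: "0 \<le> x \<Longrightarrow> x \<le> 1 \<Longrightarrow> 0 \<le> - (x * ln x) \<and> - (x * ln (x::real)) \<le> 1"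
proof -
  assume x: "0 \<le> x" "x \<le> 1"
  show ?thesis
  proof (cases "x = 0")
    case True then show ?thesis by simp
  next
    case False
    then have xp: "x > 0" using x by simp
    have "ln x \<le> 0" using x xp by simp
    then have a: "0 \<le> - (x * ln x)" using xp by (simp add: mult_nonneg_nonpos)
    have "ln (1/x) \<le> 1/x - 1" using xp by (intro ln_le_minus_one) simp
    then have "- ln x \<le> 1/x - 1" using xp by (simp add: ln_div)
    then have "x * (- ln x) \<le> x * (1/x - 1)" using xp by (intro mult_left_mono) auto
    also have "\<dots> = 1 - x" using xp by (simp add: field_simps)
    finally show ?thesis using a x by simp
  qed
qed

lemma geo_sum: "(q::real) * (\<Sum>i<k. (1 - q) ^ i) = 1 - (1 - q) ^ k"
  by (induction k) (auto simp: algebra_simps)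

context mkM begin

lemma hh_bounds: "0 \<le> hh d \<and> hh d \<le> real CARD('a)"
proof -
  let ?g = "\<lambda>a. - (\<Sum>b\<in>UNIV. pw d a b * ln (pw d a b))"
  have hhg: "hh d = (\<Sum>a\<in>UNIV. p a * ?g a)"
    by (simp add: hh_def sum_distrib_left sum_negf mult.assoc)
  have g: "0 \<le> ?g a \<and> ?g a \<le> real CARD('a)" for a
  proof -
    have "?g a = (\<Sum>b\<in>UNIV. - (pw d a b * ln (pw d a b)))" by (simp add: sum_negf)
    moreover have "0 \<le> (\<Sum>b\<in>UNIV. - (pw d a b * ln (pw d a b)))"
      by (rule sum_nonneg) (use xlnx_bounds pw_nonneg pw_le1 in blast)
    moreover have "(\<Sum>b\<in>UNIV. - (pw d a b * ln (pw d a b))) \<le> (\<Sum>b\<in>(UNIV::'a set). 1)"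
      by (rule sum_mono) (use xlnx_bounds pw_nonneg pw_le1 in blast)
    ultimately show ?thesis by simp
  qed
  have "0 \<le> (\<Sum>a\<in>UNIV. p a * ?g a)" by (intro sum_nonneg mult_nonneg_nonneg p_nonneg) (use g in blast)
  moreover have "(\<Sum>a\<in>UNIV. p a * ?g a) \<le> (\<Sum>a\<in>UNIV. p a * real CARD('a))"
    by (intro sum_mono mult_left_mono p_nonneg) (use g in blast)
  ultimately show ?thesis using hhg by (simp add: sum_distrib_right[symmetric] p_sum)
qed

end

locale lamL =
  fixes lam :: "real measure"
  assumes lam_prob: "prob_space lam"
    and lam_sets: "sets lam = sets borel"
    and lam_unit: "emeasure lam {0..1} = 1"
begin

lemma AE01: "AE q in lam. q \<in> {0..1}"
proof -
  interpret prob_space lam by (rule lam_prob)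
  have s: "{0..1::real} \<in> events" using lam_sets by simp
  have "prob {0..1} = 1" using lam_unit by (simp add: emeasure_eq_measure)
  then show ?thesis using AE_in_set_eq_1[OF s] by simp
qed

lemma meas: "f \<in> borel_measurable borel \<Longrightarrow> f \<in> borel_measurable lam"
  by (simp add: measurable_cong_sets[OF lam_sets refl])

lemma int_poly: "integrable lam (\<lambda>q. q ^ a * (1 - q) ^ b)"
proof -
  interpret prob_space lam by (rule lam_prob)
  show ?thesis
  proof (rule integrable_const_bound[where B=1])
    show "AE x in lam. norm (x ^ a * (1 - x) ^ b) \<le> 1"
      using AE01 by eventually_elim (auto simp: abs_mult power_abs intro!: mult_le_one power_le_one)
    show "(\<lambda>q. q ^ a * (1 - q) ^ b) \<in> borel_measurable lam" by (intro meas) measurable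
  qed
qed

lemma int_c: "integrable lam (\<lambda>q. q^2 * (1 - q) ^ i)" using int_poly .
lemma int_e: "integrable lam (\<lambda>q. q * (1 - q) ^ i)" using int_poly[of 1] by simp

lemma c_nonneg: "0 \<le> (\<integral>q. q^2 * (1 - q) ^ i \<partial>lam)"
  by (rule integral_nonneg_AE) (use AE01 in eventually_elim, auto)

lemma e_nonneg: "0 \<le> (\<integral>q. q * (1 - q) ^ i \<partial>lam)"
  by (rule integral_nonneg_AE) (use AE01 in eventually_elim, auto)

lemma c_sum: "(\<Sum>i<k. \<integral>q. q^2 * (1 - q) ^ i \<partial>lam) \<le> 1"
proof -
  interpret prob_space lam by (rule lam_prob)
  have "(\<Sum>i<k. \<integral>q. q^2 * (1 - q) ^ i \<partial>lam) = (\<integral>q. (\<Sum>i<k. q^2 * (1 - q) ^ i) \<partial>lam)"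
    using Bochner_Integration.integral_sum[where I="{..<k}" and M=lam and f="\<lambda>i q. q^2 * (1 - q) ^ i", OF int_c] by simp
  also have "\<dots> \<le> (\<integral>q. 1 \<partial>lam)"
  proof (rule integral_mono_AE)
    show "integrable lam (\<lambda>q. \<Sum>i<k. q^2 * (1 - q) ^ i)"
      using Bochner_Integration.integrable_sum[where I="{..<k}" and M=lam and f="\<lambda>i q. q^2 * (1 - q) ^ i", OF int_c] by simp
    show "AE q in lam. (\<Sum>i<k. q^2 * (1 - q) ^ i) \<le> 1"
      using AE01
    proof eventually_elim
      case (elim q)
      have "(\<Sum>i<k. q^2 * (1 - q) ^ i) = q * (q * (\<Sum>i<k. (1 - q) ^ i))"
        by (simp add: sum_distrib_left power2_eq_square mult.assoc)
      also have "\<dots> = q * (1 - (1 - q) ^ k)" by (simp add: geo_sum)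
      also have "\<dots> \<le> 1" using elim by (intro mult_le_one) (auto intro!: power_le_one)
      finally show ?case .
    qed
  qed simp
  finally show ?thesis by (simp add: prob_space)
qed

lemma e_sum: "(\<Sum>i<k. \<integral>q. q * (1 - q) ^ Suc i \<partial>lam) \<le> 1"
proof -
  interpret prob_space lam by (rule lam_prob)
  have "(\<Sum>i<k. \<integral>q. q * (1 - q) ^ Suc i \<partial>lam) = (\<integral>q. (\<Sum>i<k. q * (1 - q) ^ Suc i) \<partial>lam)"
    using Bochner_Integration.integral_sum[where I="{..<k}" and M=lam and f="\<lambda>i q. q * (1 - q) ^ Suc i", OF int_e] by simp
  also have "\<dots> \<le> (\<integral>q. 1 \<partial>lam)"
  proof (rule integral_mono_AE)
    show "integrable lam (\<lambda>q. \<Sum>i<k. q * (1 - q) ^ Suc i)"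
      using Bochner_Integration.integrable_sum[where I="{..<k}" and M=lam and f="\<lambda>i q. q * (1 - q) ^ Suc i", OF int_e] by simp
    show "AE q in lam. (\<Sum>i<k. q * (1 - q) ^ Suc i) \<le> 1"
      using AE01
    proof eventually_elim
      case (elim q)
      have "(\<Sum>i<k. q * (1 - q) ^ Suc i) = (1 - q) * (q * (\<Sum>i<k. (1 - q) ^ i))"
        by (simp add: sum_distrib_left mult_ac)
      also have "\<dots> = (1 - q) * (1 - (1 - q) ^ k)" by (simp add: geo_sum)
      also have "\<dots> \<le> 1" using elim by (intro mult_le_one) (auto intro!: power_le_one)
      finally show ?case .
    qed
  qed simp
  finally show ?thesis by (simp add: prob_space)
qed

end


lemma lim_c: "(\<lambda>k. c / (real k + 1)) \<longlonglongrightarrow> (0::real)"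
proof -
  have "(\<lambda>k. c * inverse (real (Suc k))) \<longlonglongrightarrow> 0"
    by (rule tendsto_mult_right_zero) (rule LIMSEQ_inverse_real_of_nat)
  then show ?thesis by (simp add: divide_inverse add.commute)
qed

lemma lim_ratio: "(\<lambda>k. (real k - real i) / (real k + 1)) \<longlonglongrightarrow> (1::real)"
proof -
  have e: "(real k - real i) / (real k + 1) = 1 - (real i + 1) / (real k + 1)" for k
    by (simp add: field_simps)
  have "(\<lambda>k. 1 - (real i + 1) / (real k + 1)) \<longlonglongrightarrow> 1 - 0"
    by (intro tendsto_diff tendsto_const lim_c)
  then show ?thesis by (simp add: e)
qed

theorem propositionB7:
  fixes P :: "'a::finite \<Rightarrow> 'a \<Rightarrow> real" and p :: "'a \<Rightarrow> real"
    and M :: "(int \<Rightarrow> 'a) measure" and lam :: "real measure"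
  assumes P_nonneg: "\<And>a b. P a b \<ge> 0"
    and P_stoch: "\<And>a. (\<Sum>b\<in>UNIV. P a b) = 1"
    and p_nonneg: "\<And>a. p a \<ge> 0"
    and p_sum: "(\<Sum>a\<in>UNIV. p a) = 1"
    and p_stat: "\<And>b. (\<Sum>a\<in>UNIV. p a * P a b) = p b"
    and M_prob: "prob_space M"
    and M_space: "space M = UNIV"
    and M_sets: "sets M = sets (Pi\<^sub>M UNIV (\<lambda>_::int. count_space (UNIV :: 'a set)))"
    and M_markov: "\<And>(k::int) (n::nat) (w::nat \<Rightarrow> 'a).
        measure M {x. \<forall>j<Suc n. x (k + int j) = w j}
          = p (w 0) * (\<Prod>j<n. P (w j) (w (Suc j)))"
    and lam_prob: "prob_space lam"
    and lam_sets: "sets lam = sets borel"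
    and lam_unit: "emeasure lam {0..1} = 1"
    and lam_sym: "\<And>f :: real \<Rightarrow> real. f \<in> borel_measurable borel \<Longrightarrow> bounded (range f) \<Longrightarrow>
        (\<integral>x. f x \<partial>lam) = (\<integral>x. f (1 - x) \<partial>lam)"
  shows "summable (\<lambda>i. (\<integral>q. q\<^sup>2 * (1 - q) ^ i \<partial>lam) * cond_entropy M alpha (alpha_i (Suc i)))
    \<and> asc_seq lam M \<longlonglongrightarrow>
        (\<Sum>i. (\<integral>q. q\<^sup>2 * (1 - q) ^ i \<partial>lam) * cond_entropy M alpha (alpha_i (Suc i)))"
proof -
  have mkMi: "mkM P p M"
    unfolding mkM_def mkM_axioms_def mk_def
    using P_nonneg P_stoch p_nonneg p_sum p_stat M_prob M_space M_sets M_markov by blast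
  interpret mkM P p M by (rule mkMi)
  have lamLi: "lamL lam" unfolding lamL_def using lam_prob lam_sets lam_unit by blast
  interpret lamL lam by (rule lamLi)
  interpret L: prob_space lam by (rule lam_prob)
  define c where "c i = (\<integral>q. q\<^sup>2 * (1 - q) ^ i \<partial>lam)" for i
  define e where "e i = (\<integral>q. q * (1 - q) ^ Suc i \<partial>lam)" for i
  define a where "a i = c i * hh (Suc i)" for i
  define B where "B = real CARD('a)"
  have c0: "0 \<le> c i" for i unfolding c_def by (rule c_nonneg)
  have e0: "0 \<le> e i" for i unfolding e_def by (rule e_nonneg)
  have csum: "(\<Sum>i<k. c i) \<le> 1" for k unfolding c_def by (rule c_sum)
  have esum1: "(\<Sum>i<k. e i) \<le> 1" for k unfolding e_def by (rule e_sum)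
  have feq: "(\<lambda>i. (\<integral>q. q\<^sup>2 * (1 - q) ^ i \<partial>lam) * cond_entropy M alpha (alpha_i (Suc i))) = a"
    by (rule ext) (simp add: a_def c_def cond_hh)
  have hb: "0 \<le> hh d" "hh d \<le> B" for d using hh_bounds[of d] by (auto simp: B_def)
  have B0: "0 \<le> B" by (simp add: B_def)
  have a0: "0 \<le> a i" for i unfolding a_def using c0 hb by simp
  have asum: "(\<Sum>i<k. a i) \<le> B" for k
  proof -
    have "(\<Sum>i<k. a i) \<le> (\<Sum>i<k. c i * B)"
      unfolding a_def by (intro sum_mono mult_left_mono) (auto simp: c0 hb)
    also have "\<dots> = B * (\<Sum>i<k. c i)" by (simp add: sum_distrib_left mult.commute)
    also have "\<dots> \<le> B * 1" using csum[of k] B0 by (intro mult_left_mono) auto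
    finally show ?thesis by simp
  qed
  have summ: "summable a"
    by (rule summableI_nonneg_bounded[where x=B]) (use a0 asum in auto)
  have esum: "(\<Sum>i<k. hh (Suc i) * e i) \<le> B" for k
  proof -
    have "(\<Sum>i<k. hh (Suc i) * e i) \<le> (\<Sum>i<k. B * e i)"
      by (intro sum_mono mult_right_mono) (auto simp: e0 hb)
    also have "\<dots> = B * (\<Sum>i<k. e i)" by (simp add: sum_distrib_left)
    also have "\<dots> \<le> B * 1" using esum1[of k] B0 by (intro mult_left_mono) auto
    finally show ?thesis by simp
  qed
  have esum0: "0 \<le> (\<Sum>i<k. hh (Suc i) * e i)" for k
    by (intro sum_nonneg mult_nonneg_nonneg) (auto simp: e0 hb)
  have integ: "(\<integral>q. (H0 + (\<Sum>i<k. hh (Suc i) * (q^2 * (1 - q) ^ i * (real k - real i) + q * (1 - q) ^ Suc i))) \<partial>lam)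
      = H0 + (\<Sum>i<k. a i * (real k - real i) + hh (Suc i) * e i)" for k
  proof -
    have "(\<lambda>q. H0 + (\<Sum>i<k. hh (Suc i) * (q^2 * (1 - q) ^ i * (real k - real i) + q * (1 - q) ^ Suc i)))
       = (\<lambda>q. H0 + (\<Sum>i<k. (hh (Suc i) * (real k - real i)) * (q^2 * (1 - q) ^ i) + hh (Suc i) * (q * (1 - q) ^ Suc i)))"
      by (simp add: algebra_simps)
    moreover have "(\<integral>q. (H0 + (\<Sum>i<k. (hh (Suc i) * (real k - real i)) * (q^2 * (1 - q) ^ i) + hh (Suc i) * (q * (1 - q) ^ Suc i))) \<partial>lam)
       = H0 + (\<Sum>i<k. (hh (Suc i) * (real k - real i)) * c i + hh (Suc i) * e i)"
    proof -
      have i1: "integrable lam (\<lambda>q. (hh (Suc i) * (real k - real i)) * (q^2 * (1 - q) ^ i) + hh (Suc i) * (q * (1 - q) ^ Suc i))" for i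
        by (intro Bochner_Integration.integrable_add Bochner_Integration.integrable_mult_right int_c int_e)
      have isum: "integrable lam (\<lambda>q. \<Sum>i<k. (hh (Suc i) * (real k - real i)) * (q^2 * (1 - q) ^ i) + hh (Suc i) * (q * (1 - q) ^ Suc i))"
        using Bochner_Integration.integrable_sum[where I="{..<k}" and f="\<lambda>i q. (hh (Suc i) * (real k - real i)) * (q^2 * (1 - q) ^ i) + hh (Suc i) * (q * (1 - q) ^ Suc i)", OF i1] by simp
      have "(\<integral>q. (H0 + (\<Sum>i<k. (hh (Suc i) * (real k - real i)) * (q^2 * (1 - q) ^ i) + hh (Suc i) * (q * (1 - q) ^ Suc i))) \<partial>lam)
         = (\<integral>q. H0 \<partial>lam) + (\<integral>q. (\<Sum>i<k. (hh (Suc i) * (real k - real i)) * (q^2 * (1 - q) ^ i) + hh (Suc i) * (q * (1 - q) ^ Suc i)) \<partial>lam)"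
        by (rule Bochner_Integration.integral_add[OF _ isum]) simp
      also have "(\<integral>q. (\<Sum>i<k. (hh (Suc i) * (real k - real i)) * (q^2 * (1 - q) ^ i) + hh (Suc i) * (q * (1 - q) ^ Suc i)) \<partial>lam)
         = (\<Sum>i<k. \<integral>q. (hh (Suc i) * (real k - real i)) * (q^2 * (1 - q) ^ i) + hh (Suc i) * (q * (1 - q) ^ Suc i) \<partial>lam)"
        by (rule Bochner_Integration.integral_sum) (rule i1)
      also have "\<dots> = (\<Sum>i<k. (hh (Suc i) * (real k - real i)) * c i + hh (Suc i) * e i)"
      proof (rule sum.cong[OF refl])
        fix i
        show "(\<integral>q. (hh (Suc i) * (real k - real i)) * (q^2 * (1 - q) ^ i) + hh (Suc i) * (q * (1 - q) ^ Suc i) \<partial>lam)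
           = (hh (Suc i) * (real k - real i)) * c i + hh (Suc i) * e i"
        proof -
          have ia: "integrable lam (\<lambda>q. (hh (Suc i) * (real k - real i)) * (q^2 * (1 - q) ^ i))"
            by (intro Bochner_Integration.integrable_mult_right int_c)
          have ib: "integrable lam (\<lambda>q. hh (Suc i) * (q * (1 - q) ^ Suc i))"
            by (intro Bochner_Integration.integrable_mult_right int_e)
          show ?thesis unfolding c_def e_def Bochner_Integration.integral_add[OF ia ib]
            by (simp only: integral_mult_right_zero)
        qed
      qed
      finally show ?thesis by (simp add: L.prob_space)
    qed
    ultimately show ?thesis by (simp add: a_def algebra_simps)
  qed
  have asc: "asc_seq lam M (Suc k) = H0 / (real k + 1) + (\<Sum>i<k. a i * ((real k - real i) / (real k + 1)))
      + (\<Sum>i<k. hh (Suc i) * e i) / (real k + 1)" for k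
  proof -
    let ?E = "\<lambda>S. part_entropy M (alpha_S S)"
    have wi: "integrable lam (\<lambda>q. wt q n S * ?E S)" for n S
      unfolding wt_def by (intro Bochner_Integration.integrable_mult_left int_poly)
    have "(\<Sum>S\<in>W (Suc k). b_weight lam (Suc k) S * ?E S) = (\<Sum>S\<in>W (Suc k). \<integral>q. wt q (Suc k) S * ?E S \<partial>lam)"
      by (simp add: b_weight_def wt_def)
    also have "\<dots> = (\<integral>q. (\<Sum>S\<in>W (Suc k). wt q (Suc k) S * ?E S) \<partial>lam)"
      by (rule Bochner_Integration.integral_sum[symmetric]) (rule wi)
    also have "\<dots> = (\<integral>q. (H0 + (\<Sum>i<k. hh (Suc i) * (q^2 * (1 - q) ^ i * (real k - real i) + q * (1 - q) ^ Suc i))) \<partial>lam)"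
    proof (rule arg_cong[where f="integral\<^sup>L lam"], rule ext)
      fix q
      show "(\<Sum>S\<in>W (Suc k). wt q (Suc k) S * ?E S) = H0 + (\<Sum>i<k. hh (Suc i) * (q^2 * (1 - q) ^ i * (real k - real i) + q * (1 - q) ^ Suc i))"
        by (rule G_closed[where E="?E" and Hz=H0 and hh=hh]) (rule E_single, erule (2) E_insert)
    qed
    also have "\<dots> = H0 + (\<Sum>i<k. a i * (real k - real i) + hh (Suc i) * e i)" by (rule integ)
    finally have "(\<Sum>S\<in>W (Suc k). b_weight lam (Suc k) S * ?E S) = H0 + (\<Sum>i<k. a i * (real k - real i) + hh (Suc i) * e i)" .
    then have "asc_seq lam M (Suc k) = (1 / real (Suc k)) * (H0 + (\<Sum>i<k. a i * (real k - real i) + hh (Suc i) * e i))"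
      unfolding asc_seq_def W_def by simp
    also have "\<dots> = H0 / (real k + 1) + (\<Sum>i<k. a i * (real k - real i)) / (real k + 1) + (\<Sum>i<k. hh (Suc i) * e i) / (real k + 1)"
    proof -
      have gen: "(1 / (real k + 1)) * (H0 + (X + Y)) = H0 / (real k + 1) + X / (real k + 1) + Y / (real k + 1)" for X Y :: real
        by (simp add: divide_inverse algebra_simps)
      show ?thesis unfolding sum.distrib of_nat_Suc add.commute[of "real k" 1] by (simp only: gen add.commute[of 1 "real k"])
    qed
    also have "(\<Sum>i<k. a i * (real k - real i)) / (real k + 1) = (\<Sum>i<k. a i * ((real k - real i) / (real k + 1)))"
      by (simp add: sum_divide_distrib)
    finally show ?thesis .
  qed
  have T1: "(\<lambda>k. H0 / (real k + 1)) \<longlonglongrightarrow> 0" by (rule lim_c)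
  have T3: "(\<lambda>k. (\<Sum>i<k. hh (Suc i) * e i) / (real k + 1)) \<longlonglongrightarrow> 0"
  proof (rule tendsto_sandwich[where f="\<lambda>_. 0" and h="\<lambda>k. B / (real k + 1)"])
    show "\<forall>\<^sub>F k in sequentially. 0 \<le> (\<Sum>i<k. hh (Suc i) * e i) / (real k + 1)"
      using esum0 by (intro always_eventually allI divide_nonneg_pos) auto
    show "\<forall>\<^sub>F k in sequentially. (\<Sum>i<k. hh (Suc i) * e i) / (real k + 1) \<le> B / (real k + 1)"
      using esum by (intro always_eventually allI divide_right_mono) auto
    show "(\<lambda>k. B / (real k + 1)) \<longlonglongrightarrow> 0" by (rule lim_c)
  qed simp
  define f where "f i k = (if i < k then a i * ((real k - real i) / (real k + 1)) else 0)" for i k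
  have fsum: "suminf (\<lambda>i. f i k) = (\<Sum>i<k. a i * ((real k - real i) / (real k + 1)))" for k
    by (subst suminf_finite[where N="{..<k}"]) (auto simp: f_def)
  have flim: "(\<lambda>k. f i k) \<longlonglongrightarrow> a i" for i
  proof -
    have r: "(\<lambda>k. (real k - real i) / (real k + 1)) \<longlonglongrightarrow> 1" by (rule lim_ratio)
    have "(\<lambda>k. a i * ((real k - real i) / (real k + 1))) \<longlonglongrightarrow> a i * 1"
      by (intro tendsto_mult tendsto_const r)
    moreover have "\<forall>\<^sub>F k in sequentially. a i * ((real k - real i) / (real k + 1)) = f i k"
      using eventually_gt_at_top[of i] by eventually_elim (simp add: f_def)
    ultimately show ?thesis by (simp add: Lim_transform_eventually)
  qed
  have fb: "norm (f i k) \<le> a i" for i k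
  proof (cases "i < k")
    case True
    have r0: "0 \<le> (real k - real i) / (real k + 1)" and r1: "(real k - real i) / (real k + 1) \<le> 1"
      using True by auto
    have "norm (f i k) = a i * ((real k - real i) / (real k + 1))"
      using True a0[of i] r0 by (simp add: f_def abs_mult)
    also have "\<dots> \<le> a i * 1" using a0[of i] r1 by (rule mult_left_mono[rotated])
    finally show ?thesis by simp
  next
    case False then show ?thesis using a0[of i] by (simp add: f_def)
  qed
  have T2: "(\<lambda>k. \<Sum>i<k. a i * ((real k - real i) / (real k + 1))) \<longlonglongrightarrow> suminf a"
  proof -
    have "(\<lambda>k. suminf (\<lambda>i. f i k)) \<longlonglongrightarrow> suminf a"
      using tannerys_theorem[where a=f and b=a and M=a and F=sequentially] flim fb summ
      by (auto intro: always_eventually)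
    then show ?thesis by (simp add: fsum)
  qed
  have "(\<lambda>k. asc_seq lam M (Suc k)) \<longlonglongrightarrow> 0 + suminf a + 0"
    unfolding asc by (intro tendsto_add T1 T2 T3)
  then have "asc_seq lam M \<longlonglongrightarrow> suminf a"
    using filterlim_sequentially_Suc[of "asc_seq lam M"] by simp
  then show ?thesis using summ feq by simp
qed


end
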